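(* Let $\mathcal S=((x_n,r_n))_{n\ge1}$ be a system satisfying $\mathcal C_1$ with sequence $(N_j)$ and associated function $\psi$, let $((y_n,\rho_n))_{n\ge1}$ be its irreducible subsystem, and fix $\varphi\in\Phi$ (which determines $\gamma$). For $\delta>1$, $U\in\mathcal G_*$ and an integer $j\ge\delta g(U)$, let $$\widetilde{\mathcal Q}(U,j,\delta)=\Big\{V\in\mathcal G_j:\ V\subset U,\ V\cap\Big(\bigcup_{k=g(U)}^{\gamma(j)}\ \bigcup_{p\in\mathcal T_k}B(y_p,\rho_p^\delta)\Big)\ne\emptyset\Big\}.$$ Then there is a constant $C_d$ depending only on $d$ such that for all such $\delta,U,j$, $$\#\widetilde{\mathcal Q}(U,j,\delta)\le C_d\,2^{d(j-g(U))}\Big[2^{-dj\varphi(2^{-j})}+\sum_{g(U)\le k\le j/\delta}2^{-dk(\delta-1-\psi(2^{-k}))}\Big].$$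
   Context: Work in $\mathbb R^d$ with the $L^\infty$ norm; $B(x,r)=\{y:\|y-x\|\le r\}$, $|A|$ is the diameter of $A$. A system is a sequence $\mathcal S=((x_n,r_n))_{n\ge1}$ with $x_n\in[0,1]^d$ and $(r_n)$ non-increasing positive tending to $0$. Irreducible subsystem: $((y_n,\rho_n))_{n\ge1}$ is the subsequence of $((x_n,r_n))$ consisting of the indices $n$ with $n=\min\{p\ge1:x_p=x_n\}$. For $j\ge0$, $\mathcal T_j=\{n:2^{-(j+1)}<\rho_n\le2^{-j}\}$. Condition $\mathcal C_1$: there is a non-decreasing sequence of positive integers $(N_j)_{j\ge0}$ with $\lim_{j}(\log_2N_j)/j=0$ such that for every $j\ge1$, $\mathcal T_j$ decomposes into at most $N_j$ pairwise disjoint subsets $\mathcal T_{j,1},\dots,\mathcal T_{j,N_j}$, each having pairwise disjoint balls $B(y_n,\rho_n)$, $n\in\mathcal T_{j,i}$. $\psi:\mathbb R_+\to\mathbb R_+$ is continuous with $\psi(0)=0$ and $N_j=2^{dj\psi(2^{-j})}$. $\Phi$ is the set of functions $\varphi:\mathbb R_+\to\mathbb R_+$ that are non-decreasing, continuous, with $\varphi(0)=0$, such that $r\mapsto r^{-\varphi(r)}$ is decreasing and tends to $+\infty$ as $r\to0^+$, and for all $\alpha,\beta>0$ the map $r\mapsto r^{\alpha-\beta\varphi(r)}$ is increasing near $0$. $\gamma(j)=\max\{k\in\mathbb N:N_k2^{dk}\le2^{-dj\varphi(2^{-j})}2^{dj}\}$. $\mathcal G_j$ is the set of dyadic subcubes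 of $[0,1]^d$ of side $2^{-j}$, $\mathcal G_*=\bigcup_{j\ge1}\mathcal G_j$, $g(I)=-\log_2|I|$. *)

theory Defs
  imports "HOL-Analysis.Analysis"
begin

text \<open>Points of R^d are elements of real^'d, with d = CARD('d).
  Closed ball for the sup (L-infinity) norm.\<close>
definition ball_inf :: "real^'d \<Rightarrow> real \<Rightarrow> (real^'d) set" where
  "ball_inf x r = {y. \<forall>i. \<bar>y $ i - x $ i\<bar> \<le> r}"

definition unit_cube :: "(real^'d) set" where
  "unit_cube = {x. \<forall>i. 0 \<le> x $ i \<and> x $ i \<le> 1}"

definition dyadic_cube :: "nat \<Rightarrow> ('d \<Rightarrow> nat) \<Rightarrow> (real^'d) set" where
  "dyadic_cube j k = {x. \<forall>i. real (k i) / 2^j \<le> x $ i \<and> x $ i \<le> (real (k i) + 1) / 2^j}"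

definition dyadic_cubes :: "nat \<Rightarrow> (real^'d) set set" where
  "dyadic_cubes j = {dyadic_cube j k | k. \<forall>i. k i < 2^j}"

text \<open>A system: centers in [0,1]^d, radii positive, non-increasing, tending to 0
  (indexed from 0 instead of 1).\<close>
definition is_system :: "(nat \<Rightarrow> real^'d) \<Rightarrow> (nat \<Rightarrow> real) \<Rightarrow> bool" where
  "is_system x r \<longleftrightarrow> (\<forall>n. x n \<in> unit_cube) \<and> (\<forall>n. 0 < r n) \<and> antimono r
     \<and> r \<longlonglongrightarrow> 0"

text \<open>Index n belongs to the irreducible subsystem iff it is the first index with centre x n.\<close>
definition first_occ :: "(nat \<Rightarrow> 'a) \<Rightarrow> nat \<Rightarrow> bool" where
  "first_occ x n \<longleftrightarrow> n = (LEAST p. x p = x n)"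

text \<open>T_j, expressed via the indices of the original system that form the irreducible
  subsystem (so y_p = x p and rho_p = r p for p in T_j).\<close>
definition T_set :: "(nat \<Rightarrow> 'a) \<Rightarrow> (nat \<Rightarrow> real) \<Rightarrow> nat \<Rightarrow> nat set" where
  "T_set x r j = {n. first_occ x n \<and> 2 powr (- real (j+1)) < r n \<and> r n \<le> 2 powr (- real j)}"

definition cond_C1 :: "(nat \<Rightarrow> real^'d) \<Rightarrow> (nat \<Rightarrow> real) \<Rightarrow> (nat \<Rightarrow> nat) \<Rightarrow> (real \<Rightarrow> real) \<Rightarrow> bool" where
  "cond_C1 x r N \<psi> \<longleftrightarrow>
     mono N \<and> (\<forall>j. 0 < N j) \<and> (\<lambda>j. log 2 (real (N j)) / real j) \<longlonglongrightarrow> 0 \<and>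
     (\<forall>j\<ge>1. \<exists>P :: nat \<Rightarrow> nat set.
         (\<Union>i<N j. P i) = T_set x r j \<and>
         (\<forall>i<N j. \<forall>i'<N j. i \<noteq> i' \<longrightarrow> P i \<inter> P i' = {}) \<and>
         (\<forall>i<N j. \<forall>n\<in>P i. \<forall>m\<in>P i. n \<noteq> m \<longrightarrow> ball_inf (x n) (r n) \<inter> ball_inf (x m) (r m) = {})) \<and>
     (\<forall>t\<ge>0. 0 \<le> \<psi> t) \<and> continuous_on {0..} \<psi> \<and> \<psi> 0 = 0 \<and>
     (\<forall>j. real (N j) = 2 powr (real CARD('d) * real j * \<psi> (2 powr (- real j))))"

definition in_Phi :: "(real \<Rightarrow> real) \<Rightarrow> bool" where
  "in_Phi \<phi> \<longleftrightarrow>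
     (\<forall>t\<ge>0. 0 \<le> \<phi> t) \<and> mono_on {0..} \<phi> \<and> continuous_on {0..} \<phi> \<and> \<phi> 0 = 0 \<and>
     (\<forall>s t. 0 < s \<longrightarrow> s < t \<longrightarrow> t powr (- \<phi> t) < s powr (- \<phi> s)) \<and>
     filterlim (\<lambda>t. t powr (- \<phi> t)) at_top (at_right 0) \<and>
     (\<forall>\<alpha>>0. \<forall>\<beta>>0. \<exists>\<epsilon>>0. \<forall>s t. 0 < s \<longrightarrow> s < t \<longrightarrow> t < \<epsilon> \<longrightarrow>
         s powr (\<alpha> - \<beta> * \<phi> s) < t powr (\<alpha> - \<beta> * \<phi> t))"

text \<open>gamma(j); the set is finite, and if it is empty we use 0 (since g(U) >= 1 this
  makes the corresponding union empty, as intended).\<close>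
definition gamma :: "nat \<Rightarrow> (nat \<Rightarrow> nat) \<Rightarrow> (real \<Rightarrow> real) \<Rightarrow> nat \<Rightarrow> nat" where
  "gamma d N \<phi> j =
     (let S = {k. real (N k) * 2 powr (real d * real k)
                   \<le> 2 powr (- real d * real j * \<phi> (2 powr (- real j))) * 2 powr (real d * real j)}
      in if S = {} then 0 else Max S)"

text \<open>The set Q~(U,j,delta), with U in G_{jU} (so g(U) = jU).\<close>
definition Qtilde :: "(nat \<Rightarrow> real^'d) \<Rightarrow> (nat \<Rightarrow> real) \<Rightarrow> (nat \<Rightarrow> nat) \<Rightarrow> (real \<Rightarrow> real)
    \<Rightarrow> (real^'d) set \<Rightarrow> nat \<Rightarrow> nat \<Rightarrow> real \<Rightarrow> (real^'d) set set" where
  "Qtilde x r N \<phi> U jU j \<delta> =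
     {V \<in> dyadic_cubes j. V \<subseteq> U \<and>
        V \<inter> (\<Union>k\<in>{jU..gamma CARD('d) N \<phi> j}. \<Union>p\<in>T_set x r k. ball_inf (x p) (r p powr \<delta>)) \<noteq> {}}"

end

theory Submission
  imports Defs
begin

lemma card_int_interval:
  fixes a L :: real assumes "0 \<le> L"
  shows "finite {n::int. a \<le> n \<and> n \<le> a + L}" "real (card {n::int. a \<le> n \<and> n \<le> a + L}) \<le> L + 1"
proof -
  have sub: "{n::int. a \<le> n \<and> n \<le> a + L} = {\<lceil>a\<rceil>..\<lfloor>a+L\<rfloor>}"
    by (auto simp: ceiling_le_iff le_floor_iff)
  show "finite {n::int. a \<le> n \<and> n \<le> a + L}" unfolding sub by simp
  have "real (card {\<lceil>a\<rceil>..\<lfloor>a+L\<rfloor>}) \<le> L + 1"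
  proof (cases "\<lceil>a\<rceil> \<le> \<lfloor>a+L\<rfloor>")
    case True
    then have "real (card {\<lceil>a\<rceil>..\<lfloor>a+L\<rfloor>}) = real_of_int (\<lfloor>a+L\<rfloor> - \<lceil>a\<rceil> + 1)" by simp
    also have "\<dots> \<le> L + 1" using of_int_floor_le[of "a+L"] ceiling_correct[of a] by linarith
    finally show ?thesis .
  next
    case False then show ?thesis using assms by simp
  qed
  then show "real (card {n::int. a \<le> n \<and> n \<le> a + L}) \<le> L + 1" unfolding sub .
qed

lemma card_nat_interval:
  fixes a L :: real assumes "0 \<le> L"
  shows "finite {n::nat. a \<le> n \<and> n \<le> a + L}" "real (card {n::nat. a \<le> n \<and> n \<le> a + L}) \<le> L + 1"
proof -
  let ?S = "{n::nat. a \<le> n \<and> n \<le> a + L}"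
  have sub: "int ` ?S \<subseteq> {n::int. a \<le> n \<and> n \<le> a + L}" by auto
  have fin: "finite (int ` ?S)" using card_int_interval(1)[OF assms] finite_subset[OF sub] by blast
  then show "finite ?S" using finite_imageD inj_on_of_nat by blast
  have "card ?S = card (int ` ?S)" by (simp add: card_image)
  also have "\<dots> \<le> card {n::int. a \<le> n \<and> n \<le> a + L}" by (rule card_mono[OF card_int_interval(1)[OF assms] sub])
  finally show "real (card ?S) \<le> L + 1" using card_int_interval(2)[OF assms, of a] by linarith
qed

lemma card_fun_box:
  fixes I :: "'d::finite \<Rightarrow> 'a set"
  assumes "\<And>i. finite (I i)" "\<And>i. real (card (I i)) \<le> c"
  shows "finite {f. \<forall>i. f i \<in> I i}" "real (card {f. \<forall>i. f i \<in> I i}) \<le> c ^ CARD('d)"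
proof -
  have eq: "{f. \<forall>i. f i \<in> I i} = PiE UNIV I" by (auto simp: PiE_def Pi_def)
  show "finite {f. \<forall>i. f i \<in> I i}" unfolding eq using assms(1) by (simp add: finite_PiE)
  have "real (card (PiE UNIV I)) = (\<Prod>i\<in>UNIV. real (card (I i)))" by (simp add: card_PiE)
  also have "\<dots> \<le> (\<Prod>i\<in>(UNIV::'d set). c)" by (rule prod_mono) (use assms(2) in auto)
  also have "\<dots> = c ^ CARD('d)" by simp
  finally show "real (card {f. \<forall>i. f i \<in> I i}) \<le> c ^ CARD('d)" unfolding eq .
qed

lemma cubes_meeting_ball:
  fixes c :: "real^'d" assumes R: "0 \<le> R"
  shows "finite {V \<in> dyadic_cubes j. V \<inter> ball_inf c R \<noteq> {}}"
    "real (card {V \<in> dyadic_cubes j. V \<inter> ball_inf c R \<noteq> {}}) \<le> (2*R*2^j + 2)^CARD('d)"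
proof -
  define I where "I i = {n::nat. (c$i - R)*2^j - 1 \<le> n \<and> n \<le> (c$i - R)*2^j - 1 + (2*R*2^j+1)}" for i
  define K where "K = {kk. \<forall>i. kk i \<in> I i}"
  have L: "0 \<le> 2*R*2^j+1" using R by simp
  have fI: "\<And>i. finite (I i)" unfolding I_def by (rule card_nat_interval(1)[OF L])
  have cI: "\<And>i. real (card (I i)) \<le> 2*R*2^j + 2" 
    using card_nat_interval(2)[OF L, of "(c$i - R)*2^j - 1" for i] unfolding I_def by (simp add: add.assoc)
  have fK: "finite K" unfolding K_def by (rule card_fun_box(1)[OF fI cI])
  have cK: "real (card K) \<le> (2*R*2^j + 2)^CARD('d)" unfolding K_def by (rule card_fun_box(2)[OF fI cI])
  have sub: "{V \<in> dyadic_cubes j. V \<inter> ball_inf c R \<noteq> {}} \<subseteq> dyadic_cube j ` K"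
  proof
    fix V assume "V \<in> {V \<in> dyadic_cubes j. V \<inter> ball_inf c R \<noteq> {}}"
    then obtain kk y where V: "V = dyadic_cube j kk" and yV: "y \<in> dyadic_cube j kk" and yB: "y \<in> ball_inf c R"
      unfolding dyadic_cubes_def by blast
    have "kk i \<in> I i" for i
    proof -
      have p: "0 < (2::real)^j" by simp
      have a: "real (kk i) / 2^j \<le> y$i" "y$i \<le> (real (kk i) + 1) / 2^j"
        using yV unfolding dyadic_cube_def by auto
      have b: "\<bar>y$i - c$i\<bar> \<le> R" using yB unfolding ball_inf_def by auto
      have "real (kk i) \<le> y$i * 2^j" "y$i * 2^j \<le> real (kk i) + 1"
        using a p by (simp_all add: field_simps)
      moreover have "(c$i - R) * 2^j \<le> y$i * 2^j" "y$i * 2^j \<le> (c$i + R) * 2^j"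
        using b p by (simp_all add: mult_right_mono)
      ultimately show ?thesis unfolding I_def by (auto simp: algebra_simps)
    qed
    then show "V \<in> dyadic_cube j ` K" unfolding K_def V by blast
  qed
  show "finite {V \<in> dyadic_cubes j. V \<inter> ball_inf c R \<noteq> {}}" using finite_subset[OF sub] fK by blast
  have "card {V \<in> dyadic_cubes j. V \<inter> ball_inf c R \<noteq> {}} \<le> card (dyadic_cube j ` K)"
    by (rule card_mono[OF _ sub]) (use fK in simp)
  also have "\<dots> \<le> card K" by (rule card_image_le[OF fK])
  finally show "real (card {V \<in> dyadic_cubes j. V \<inter> ball_inf c R \<noteq> {}}) \<le> (2*R*2^j + 2)^CARD('d)"
    using cK by linarith
qed

lemma ceil_close:
  fixes t s :: real assumes "0 < s"
  shows "\<bar>real_of_int \<lceil>t * s\<rceil> / s - t\<bar> < 1 / s"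
proof -
  have "t * s \<le> of_int \<lceil>t * s\<rceil>" "of_int \<lceil>t * s\<rceil> < t * s + 1" by linarith+
  then have "t \<le> real_of_int \<lceil>t * s\<rceil> / s" "real_of_int \<lceil>t * s\<rceil> / s < t + 1/s"
    using assms by (simp_all add: field_simps)
  then show ?thesis by linarith
qed

lemma family_count:
  fixes x :: "nat \<Rightarrow> real^'d" and a :: "'d \<Rightarrow> nat"
  assumes disj: "\<forall>n\<in>P. \<forall>m\<in>P. n \<noteq> m \<longrightarrow> ball_inf (x n) (r n) \<inter> ball_inf (x m) (r m) = {}"
  and rad: "\<forall>n\<in>P. 1/2^(k+1) < r n \<and> r n \<le> 1/2^k"
  and jk: "jU \<le> k"
  shows "finite {n\<in>P. ball_inf (x n) (r n) \<inter> dyadic_cube jU a \<noteq> {}}"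
    "real (card {n\<in>P. ball_inf (x n) (r n) \<inter> dyadic_cube jU a \<noteq> {}}) \<le> (8 * 2^(k-jU))^CARD('d)"
proof -
  define S where "S = {n\<in>P. ball_inf (x n) (r n) \<inter> dyadic_cube jU a \<noteq> {}}"
  define s :: real where "s = 2^(k+1)"
  have s: "0 < s" unfolding s_def by simp
  define z where "z n = (\<lambda>i. \<lceil>x n $ i * s\<rceil>)" for n
  define lo where "lo i = (real (a i)/2^jU - 1/2^k) * s" for i
  define Lc :: real where "Lc = s/2^jU + 5"
  define J where "J i = {q::int. lo i \<le> q \<and> q \<le> lo i + Lc}" for i
  have Lc: "0 \<le> Lc" unfolding Lc_def using s by simp
  have sj: "s/2^jU = 2 * 2^(k-jU)" unfolding s_def using jk
    by (simp add: power_add[symmetric] field_simps)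
  have fJ: "\<And>i. finite (J i)" unfolding J_def by (rule card_int_interval(1)[OF Lc])
  have cJ: "\<And>i. real (card (J i)) \<le> 8 * 2^(k-jU)"
  proof -
    fix i
    have "real (card (J i)) \<le> Lc + 1" unfolding J_def by (rule card_int_interval(2)[OF Lc])
    also have "\<dots> = 2 * 2^(k-jU) + 6" unfolding Lc_def sj by simp
    also have "\<dots> \<le> 8 * 2^(k-jU)" using one_le_power[of "2::real" "k-jU"] by simp
    finally show "real (card (J i)) \<le> 8 * 2^(k-jU)" .
  qed
  have inj: "inj_on z S"
  proof
    fix n m assume n: "n \<in> S" and m: "m \<in> S" and e: "z n = z m"
    show "n = m"
    proof (rule ccontr)
      assume ne: "n \<noteq> m"
      define w :: "real^'d" where "w = (\<chi> i. real_of_int (z n i) / s)"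
      have inb: "w \<in> ball_inf (x q) (r q)" if q: "q \<in> S" "z q = z n" for q
      proof -
        have "1/s = 1/2^(k+1)" unfolding s_def by simp
        then have "1/s < r q" using rad q(1) unfolding S_def by auto
        then show ?thesis unfolding ball_inf_def w_def using ceil_close[OF s] q(2)[symmetric]
          by (auto simp: z_def) (smt (verit, best) ceil_close s)
      qed
      have "w \<in> ball_inf (x n) (r n) \<inter> ball_inf (x m) (r m)" using inb[OF n] inb[OF m] e by auto
      moreover have "n \<in> P" "m \<in> P" using n m unfolding S_def by auto
      ultimately show False using disj ne by blast
    qed
  qed
  have sub: "z ` S \<subseteq> {f. \<forall>i. f i \<in> J i}"
  proof (safe)
    fix n i assume n: "n \<in> S"
    then obtain u where u: "u \<in> ball_inf (x n) (r n)" "u \<in> dyadic_cube jU a" unfolding S_def by auto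
    have rn: "r n \<le> 1/2^k" using rad n unfolding S_def by auto
    have ub: "real (a i)/2^jU \<le> u$i" "u$i \<le> (real (a i)+1)/2^jU" using u(2) unfolding dyadic_cube_def by auto
    have xb: "\<bar>u$i - x n $ i\<bar> \<le> r n" using u(1) unfolding ball_inf_def by auto
    have lx: "real (a i)/2^jU - 1/2^k \<le> x n $ i" "x n $ i \<le> (real (a i)+1)/2^jU + 1/2^k"
      using ub xb rn by linarith+
    have "lo i \<le> x n $ i * s" unfolding lo_def using mult_right_mono[OF lx(1)] s by simp
    moreover have "x n $ i * s \<le> ((real (a i)+1)/2^jU + 1/2^k) * s" using mult_right_mono[OF lx(2)] s by simp
    moreover have "((real (a i)+1)/2^jU + 1/2^k) * s = lo i + s/2^jU + 4"
      unfolding lo_def s_def by (simp add: field_simps)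
    moreover have "x n $ i * s \<le> of_int \<lceil>x n $ i * s\<rceil>" "of_int \<lceil>x n $ i * s\<rceil> < x n $ i * s + 1" by linarith+
    ultimately have "lo i \<le> of_int (z n i)" "of_int (z n i) \<le> lo i + Lc" unfolding z_def Lc_def by linarith+
    then show "z n i \<in> J i" unfolding J_def by simp
  qed
  have fB: "finite {f. \<forall>i. f i \<in> J i}" by (rule card_fun_box(1)[OF fJ cJ])
  have fS: "finite S" using finite_imageD[OF finite_subset[OF sub fB] inj] .
  then show "finite {n\<in>P. ball_inf (x n) (r n) \<inter> dyadic_cube jU a \<noteq> {}}" unfolding S_def .
  have "card S = card (z ` S)" using card_image[OF inj] by simp
  also have "\<dots> \<le> card {f. \<forall>i. f i \<in> J i}" by (rule card_mono[OF fB sub])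
  finally have "real (card S) \<le> real (card {f. \<forall>i. f i \<in> J i})" by simp
  also have "\<dots> \<le> (8 * 2^(k-jU))^CARD('d)" by (rule card_fun_box(2)[OF fJ cJ])
  finally show "real (card {n\<in>P. ball_inf (x n) (r n) \<inter> dyadic_cube jU a \<noteq> {}}) \<le> (8 * 2^(k-jU))^CARD('d)"
    unfolding S_def .
qed

lemma two_powr_neg_nat: "(2::real) powr (- real m) = 1 / 2^m"
  by (simp add: powr_minus powr_realpow divide_inverse)

lemma Ak_count:
  fixes x :: "nat \<Rightarrow> real^'d" and a :: "'d \<Rightarrow> nat"
  assumes C1: "cond_C1 x r N \<psi>" and k1: "1 \<le> k" and jk: "jU \<le> k"
  shows "finite {p\<in>T_set x r k. ball_inf (x p) (r p) \<inter> dyadic_cube jU a \<noteq> {}}"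
    "real (card {p\<in>T_set x r k. ball_inf (x p) (r p) \<inter> dyadic_cube jU a \<noteq> {}})
       \<le> real (N k) * (8 * 2^(k-jU))^CARD('d)"
proof -
  obtain P :: "nat \<Rightarrow> nat set" where PU: "(\<Union>i<N k. P i) = T_set x r k" and
    Pd: "\<forall>i<N k. \<forall>n\<in>P i. \<forall>m\<in>P i. n \<noteq> m \<longrightarrow> ball_inf (x n) (r n) \<inter> ball_inf (x m) (r m) = {}"
  proof -
    have "\<forall>j\<ge>1. \<exists>P :: nat \<Rightarrow> nat set.
         (\<Union>i<N j. P i) = T_set x r j \<and>
         (\<forall>i<N j. \<forall>i'<N j. i \<noteq> i' \<longrightarrow> P i \<inter> P i' = {}) \<and>
         (\<forall>i<N j. \<forall>n\<in>P i. \<forall>m\<in>P i. n \<noteq> m \<longrightarrow> ball_inf (x n) (r n) \<inter> ball_inf (x m) (r m) = {})"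
      using C1 unfolding cond_C1_def by (elim conjE) assumption
    then have ex: "\<exists>P :: nat \<Rightarrow> nat set.
         (\<Union>i<N k. P i) = T_set x r k \<and>
         (\<forall>i<N k. \<forall>i'<N k. i \<noteq> i' \<longrightarrow> P i \<inter> P i' = {}) \<and>
         (\<forall>i<N k. \<forall>n\<in>P i. \<forall>m\<in>P i. n \<noteq> m \<longrightarrow> ball_inf (x n) (r n) \<inter> ball_inf (x m) (r m) = {})"
      using k1 by (elim allE impE)
    show ?thesis using ex apply (elim exE conjE) apply (rule that) apply assumption+ done
  qed
  define B where "B i = {n\<in>P i. ball_inf (x n) (r n) \<inter> dyadic_cube jU a \<noteq> {}}" for i
  have eq: "{p\<in>T_set x r k. ball_inf (x p) (r p) \<inter> dyadic_cube jU a \<noteq> {}} = (\<Union>i<N k. B i)"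
    unfolding B_def PU[symmetric] by blast
  have rad: "\<forall>n\<in>P i. 1/2^(k+1) < r n \<and> r n \<le> 1/2^k" if "i < N k" for i
  proof
    fix n assume "n \<in> P i"
    then have "n \<in> T_set x r k" using PU that by blast
    then show "1/2^(k+1) < r n \<and> r n \<le> 1/2^k" unfolding T_set_def
      using two_powr_neg_nat[of "k+1"] two_powr_neg_nat[of k] by simp
  qed
  have fB: "finite (B i)" and cB: "real (card (B i)) \<le> (8 * 2^(k-jU))^CARD('d)" if "i < N k" for i
  proof -
    have d: "\<forall>n\<in>P i. \<forall>m\<in>P i. n \<noteq> m \<longrightarrow> ball_inf (x n) (r n) \<inter> ball_inf (x m) (r m) = {}"
      using Pd that by blast
    show "finite (B i)" unfolding B_def by (rule family_count(1)[OF d rad[OF that] jk])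
    show "real (card (B i)) \<le> (8 * 2^(k-jU))^CARD('d)" unfolding B_def by (rule family_count(2)[OF d rad[OF that] jk])
  qed
  show "finite {p\<in>T_set x r k. ball_inf (x p) (r p) \<inter> dyadic_cube jU a \<noteq> {}}"
    unfolding eq using fB by blast
  have "card (\<Union>i<N k. B i) \<le> (\<Sum>i<N k. card (B i))" by (rule card_UN_le) simp
  then have "real (card (\<Union>i<N k. B i)) \<le> (\<Sum>i<N k. real (card (B i)))"
    by (metis of_nat_le_iff of_nat_sum)
  also have "\<dots> \<le> (\<Sum>i<N k. (8 * 2^(k-jU))^CARD('d))" by (rule sum_mono) (use cB in auto)
  also have "\<dots> = real (N k) * (8 * 2^(k-jU))^CARD('d)" by simp
  finally show "real (card {p\<in>T_set x r k. ball_inf (x p) (r p) \<inter> dyadic_cube jU a \<noteq> {}})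
       \<le> real (N k) * (8 * 2^(k-jU))^CARD('d)" unfolding eq .
qed

lemma geom_le: "(q::real) \<ge> 2 \<Longrightarrow> (\<Sum>k\<le>n. q^k) \<le> 2 * q^n"
proof (induction n)
  case 0 then show ?case by simp
next
  case (Suc n)
  have "(\<Sum>k\<le>Suc n. q^k) \<le> 2*q^n + q^Suc n" using Suc by simp
  also have "\<dots> \<le> 2*q^Suc n" using Suc.prems by (simp add: mult_right_mono)
  finally show ?case .
qed

lemma geom_N:
  assumes "mono N" and d: "1 \<le> d"
  shows "(\<Sum>k\<le>n. real (N k) * 2 powr (real d * real k)) \<le> 2 * real (N n) * 2 powr (real d * real n)"
proof -
  have pw: "(2::real) powr (real d * real k) = (2^d)^k" for k
    by (metis of_nat_mult powr_realpow power_mult zero_less_numeral)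
  have q: "(2::real)^d \<ge> 2" using d by (metis power_increasing power_one_right one_le_numeral)
  have "(\<Sum>k\<le>n. real (N k) * 2 powr (real d * real k)) \<le> (\<Sum>k\<le>n. real (N n) * (2^d)^k)"
    by (rule sum_mono) (use assms(1) in \<open>auto simp: pw mono_def intro!: mult_right_mono\<close>)
  also have "\<dots> = real (N n) * (\<Sum>k\<le>n. (2^d)^k)" by (simp add: sum_distrib_left)
  also have "\<dots> \<le> real (N n) * (2 * (2^d)^n)" by (rule mult_left_mono[OF geom_le[OF q]]) simp
  finally show ?thesis by (simp add: pw)
qed

lemma powr_delta_le: "0 < (t::real) \<Longrightarrow> t \<le> 1 \<Longrightarrow> 1 < \<delta> \<Longrightarrow> t powr \<delta> \<le> t"
  using powr_mono'[of 1 \<delta> t] by simp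

definition Ef :: "real \<Rightarrow> nat \<Rightarrow> nat \<Rightarrow> real" where
  "Ef \<delta> j k = (if real k * \<delta> \<le> real j then 2 powr (real j - real k * \<delta>) else 1)"

lemma ball_inf_mono: "R \<le> R' \<Longrightarrow> ball_inf c R \<subseteq> ball_inf c R'"
  unfolding ball_inf_def by (auto intro: order_trans)

lemma per_ball:
  fixes c :: "real^'d"
  assumes r0: "0 < \<rho>" and rk: "\<rho> \<le> 2 powr (- real k)" and dl: "1 < \<delta>"
  shows "finite {V \<in> dyadic_cubes j. V \<inter> ball_inf c (\<rho> powr \<delta>) \<noteq> {}}"
    "real (card {V \<in> dyadic_cubes j. V \<inter> ball_inf c (\<rho> powr \<delta>) \<noteq> {}}) \<le> (4 * Ef \<delta> j k)^CARD('d)"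
proof -
  have R0: "0 \<le> \<rho> powr \<delta>" by simp
  show "finite {V \<in> dyadic_cubes j. V \<inter> ball_inf c (\<rho> powr \<delta>) \<noteq> {}}" by (rule cubes_meeting_ball(1)[OF R0])
  have "\<rho> powr \<delta> \<le> (2 powr (- real k)) powr \<delta>" by (rule powr_mono2) (use r0 rk dl in auto)
  also have "\<dots> = 2 powr (- real k * \<delta>)" by (simp add: powr_powr)
  finally have "\<rho> powr \<delta> * 2^j \<le> 2 powr (- real k * \<delta>) * 2 powr real j"
    by (simp add: powr_realpow)
  also have "\<dots> = 2 powr (real j - real k * \<delta>)" by (simp add: powr_add[symmetric])
  finally have b: "\<rho> powr \<delta> * 2^j \<le> 2 powr (real j - real k * \<delta>)" .
  have e: "2 * \<rho> powr \<delta> * 2^j + 2 \<le> 4 * Ef \<delta> j k"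
  proof (cases "real k * \<delta> \<le> real j")
    case True
    then have "1 \<le> 2 powr (real j - real k * \<delta>)" by (intro ge_one_powr_ge_zero) auto
    then show ?thesis using b True unfolding Ef_def by simp
  next
    case False
    then have "2 powr (real j - real k * \<delta>) < 1" by (intro powr_less_one) auto
    then show ?thesis using b False unfolding Ef_def by simp
  qed
  have "real (card {V \<in> dyadic_cubes j. V \<inter> ball_inf c (\<rho> powr \<delta>) \<noteq> {}}) \<le> (2 * \<rho> powr \<delta> * 2^j + 2)^CARD('d)"
    by (rule cubes_meeting_ball(2)[OF R0])
  also have "\<dots> \<le> (4 * Ef \<delta> j k)^CARD('d)" by (rule power_mono[OF e]) simp
  finally show "real (card {V \<in> dyadic_cubes j. V \<inter> ball_inf c (\<rho> powr \<delta>) \<noteq> {}}) \<le> (4 * Ef \<delta> j k)^CARD('d)" .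
qed

lemma Ef_nonneg: "0 \<le> Ef \<delta> j k" unfolding Ef_def by simp

lemma term_eq:
  fixes d :: nat and Nk :: nat
  assumes Nk: "real Nk = 2 powr (real d * real k * \<psi>k)" and jk: "jU \<le> k"
  shows "real Nk * (8 * 2^(k-jU))^d * (4 * Ef \<delta> j k)^d
    = 32^d * 2 powr (real d * (real j - real jU)) *
      (if real k * \<delta> \<le> real j then 2 powr (- real d * real k * (\<delta> - 1 - \<psi>k))
       else real Nk * 2 powr (real d * real k) * 2 powr (- real d * real j))"
proof -
  have h: "(8::real)^d * 4^d = 32^d" by (simp add: power_mult_distrib[symmetric])
  have p1: "(2::real)^(k-jU) = 2 powr (real k - real jU)" using jk by (simp add: powr_realpow[symmetric] of_nat_diff)
  have "real Nk * (8 * 2^(k-jU))^d * (4 * Ef \<delta> j k)^d = 32^d * (real Nk * (2 powr (real k - real jU))^d * (Ef \<delta> j k)^d)"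
    using h by (simp add: p1 power_mult_distrib)
  also have "(2 powr (real k - real jU))^d = 2 powr (real d * (real k - real jU))" by (simp add: powr_power)
  finally have s: "real Nk * (8 * 2^(k-jU))^d * (4 * Ef \<delta> j k)^d = 32^d * (real Nk * 2 powr (real d * (real k - real jU)) * (Ef \<delta> j k)^d)" .
  show ?thesis
  proof (cases "real k * \<delta> \<le> real j")
    case True
    have "(Ef \<delta> j k)^d = 2 powr (real d * (real j - real k * \<delta>))" using True unfolding Ef_def by (simp add: powr_power)
    then have "real Nk * 2 powr (real d * (real k - real jU)) * (Ef \<delta> j k)^d
       = 2 powr (real d * real k * \<psi>k + real d * (real k - real jU) + real d * (real j - real k * \<delta>))"
      using Nk by (simp add: powr_add)
    also have "\<dots> = 2 powr (real d * (real j - real jU) + - real d * real k * (\<delta> - 1 - \<psi>k))"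
      by (rule arg_cong[where f="\<lambda>t. 2 powr t"]) (simp add: algebra_simps)
    also have "\<dots> = 2 powr (real d * (real j - real jU)) * 2 powr (- real d * real k * (\<delta> - 1 - \<psi>k))"
      by (rule powr_add)
    finally show ?thesis using s True by simp
  next
    case False
    have "(Ef \<delta> j k)^d = 1" using False unfolding Ef_def by simp
    moreover have "2 powr (real d * (real k - real jU)) = 2 powr (real d * (real j - real jU)) * (2 powr (real d * real k) * 2 powr (- real d * real j))"
      by (simp add: powr_add[symmetric] algebra_simps)
    ultimately show ?thesis using s False by (simp add: algebra_simps)
  qed
qed

lemma gamma_facts:
  fixes N :: "nat \<Rightarrow> nat" and d :: nat
  assumes d1: "1 \<le> d" and N1: "\<forall>k. 0 < N k" and g: "gamma d N \<phi> j \<noteq> 0"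
  shows "real (N (gamma d N \<phi> j)) * 2 powr (real d * real (gamma d N \<phi> j))
           \<le> 2 powr (- real d * real j * \<phi> (2 powr (- real j))) * 2 powr (real d * real j)"
proof -
  define X where "X = 2 powr (- real d * real j * \<phi> (2 powr (- real j))) * 2 powr (real d * real j)"
  define S where "S = {k. real (N k) * 2 powr (real d * real k) \<le> X}"
  have gS: "gamma d N \<phi> j = (if S = {} then 0 else Max S)" unfolding gamma_def S_def X_def Let_def by simp
  have ne: "S \<noteq> {}" using g gS by auto
  have "S \<subseteq> {..nat \<lceil>X\<rceil>}"
  proof
    fix k assume "k \<in> S"
    then have kX: "real (N k) * 2 powr (real d * real k) \<le> X" unfolding S_def by simp
    have "real k \<le> 2 powr real k" using less_exp[of k] by (simp add: powr_realpow)
    also have "\<dots> \<le> 2 powr (real d * real k)" using d1 mult_right_mono[of 1 "real d" "real k"] by (intro powr_mono) auto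
    also have "\<dots> \<le> real (N k) * 2 powr (real d * real k)" using N1[rule_format, of k]
      by (simp add: mult_le_cancel_right1)
    finally have "real k \<le> X" using kX by linarith
    then show "k \<in> {..nat \<lceil>X\<rceil>}" by (simp add: le_nat_iff le_ceiling_iff)
  qed
  then have "finite S" using finite_subset by blast
  then have "Max S \<in> S" using ne by simp
  moreover have "gamma d N \<phi> j = Max S" using gS ne by simp
  ultimately have "gamma d N \<phi> j \<in> S" by simp
  then show ?thesis unfolding S_def X_def by (rule CollectD)
qed

lemma sumF_bound:
  fixes N :: "nat \<Rightarrow> nat" and d :: nat
  assumes d1: "1 \<le> d" and N1: "\<forall>k. 0 < N k" and monoN: "mono N" and dl: "1 < \<delta>" and jU1: "1 \<le> jU"
  shows "(\<Sum>k\<in>{jU..gamma d N \<phi> j}. (if real k * \<delta> \<le> real j then 2 powr (- real d * real k * (\<delta> - 1 - \<psi> (2 powr (- real k))))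
       else real (N k) * 2 powr (real d * real k) * 2 powr (- real d * real j)))
   \<le> 2 * (2 powr (- real d * real j * \<phi> (2 powr (- real j)))
           + (\<Sum>k\<in>{k. jU \<le> k \<and> real k \<le> real j / \<delta>}.
                2 powr (- real d * real k * (\<delta> - 1 - \<psi> (2 powr (- real k))))))"
proof -
  define g where "g = gamma d N \<phi> j"
  define f where "f k = 2 powr (- real d * real k * (\<delta> - 1 - \<psi> (2 powr (- real k))))" for k
  define h where "h k = real (N k) * 2 powr (real d * real k) * 2 powr (- real d * real j)" for k
  define B where "B = 2 powr (- real d * real j * \<phi> (2 powr (- real j)))"
  define Tg where "Tg = {k. jU \<le> k \<and> real k \<le> real j / \<delta>}"
  define K where "K = {jU..g}"
  have "(\<Sum>k\<in>K. (if real k * \<delta> \<le> real j then f k else h k))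
      = (\<Sum>k\<in>K \<inter> {k. real k * \<delta> \<le> real j}. f k) + (\<Sum>k\<in>K \<inter> - {k. real k * \<delta> \<le> real j}. h k)"
    by (rule sum.If_cases) (simp add: K_def)
  also have "(\<Sum>k\<in>K \<inter> {k. real k * \<delta> \<le> real j}. f k) \<le> (\<Sum>k\<in>Tg. f k)"
  proof (rule sum_mono2)
    have "Tg \<subseteq> {..j}"
    proof
      fix k assume "k \<in> Tg"
      then have "real k \<le> real j / \<delta>" unfolding Tg_def by simp
      also have "\<dots> \<le> real j" using dl mult_left_mono[of 1 \<delta> "real j"] by (simp add: divide_le_eq)
      finally show "k \<in> {..j}" by simp
    qed
    then show "finite Tg" using finite_subset by blast
    show "K \<inter> {k. real k * \<delta> \<le> real j} \<subseteq> Tg" unfolding K_def Tg_def using dl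
      by (auto simp: le_divide_eq)
    show "\<And>b. b \<in> Tg - K \<inter> {k. real k * \<delta> \<le> real j} \<Longrightarrow> 0 \<le> f b" unfolding f_def by simp
  qed
  also have "(\<Sum>k\<in>K \<inter> - {k. real k * \<delta> \<le> real j}. h k) \<le> 2 * B"
  proof (cases "g = 0")
    case True
    then have "K = {}" unfolding K_def using jU1 by auto
    then show ?thesis unfolding B_def by simp
  next
    case False
    have "(\<Sum>k\<in>K \<inter> - {k. real k * \<delta> \<le> real j}. h k) \<le> (\<Sum>k\<le>g. h k)"
      by (rule sum_mono2) (auto simp: K_def h_def)
    also have "\<dots> = 2 powr (- real d * real j) * (\<Sum>k\<le>g. real (N k) * 2 powr (real d * real k))"
      unfolding h_def by (simp add: sum_distrib_left algebra_simps)
    also have "\<dots> \<le> 2 powr (- real d * real j) * (2 * real (N g) * 2 powr (real d * real g))"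
      by (rule mult_left_mono[OF geom_N[OF monoN d1]]) simp
    also have "\<dots> \<le> 2 powr (- real d * real j) * (2 * (B * 2 powr (real d * real j)))"
      using gamma_facts[OF d1 N1 False[unfolded g_def]] unfolding g_def B_def
      by (intro mult_left_mono) auto
    also have "\<dots> = 2 * B * (2 powr (- real d * real j) * 2 powr (real d * real j))" by simp
    also have "2 powr (- real d * real j) * 2 powr (real d * real j) = 1" by (simp add: powr_add[symmetric])
    finally show ?thesis by simp
  qed
  finally have fin: "(\<Sum>k\<in>K. (if real k * \<delta> \<le> real j then f k else h k)) \<le> (\<Sum>k\<in>Tg. f k) + 2 * B"
    by simp
  have "0 \<le> (\<Sum>k\<in>Tg. f k)" unfolding f_def by (simp add: sum_nonneg)
  have "(\<Sum>k\<in>K. (if real k * \<delta> \<le> real j then f k else h k)) \<le> 2 * (B + (\<Sum>k\<in>Tg. f k))"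
  proof (rule order_trans[OF fin])
    show "(\<Sum>k\<in>Tg. f k) + 2 * B \<le> 2 * (B + (\<Sum>k\<in>Tg. f k))" using \<open>0 \<le> (\<Sum>k\<in>Tg. f k)\<close> by (simp add: algebra_simps)
  qed
  then show ?thesis unfolding K_def g_def f_def h_def Tg_def B_def .
qed

theorem mainTheorem3:
  "\<exists>C::real. \<forall>(x :: nat \<Rightarrow> real^'d) r N \<psi> \<phi> \<delta> U jU j.
     is_system x r \<and> cond_C1 x r N \<psi> \<and> in_Phi \<phi> \<and>
     1 < \<delta> \<and> 1 \<le> jU \<and> U \<in> dyadic_cubes jU \<and> \<delta> * real jU \<le> real j \<longrightarrow>
     real (card (Qtilde x r N \<phi> U jU j \<delta>))
       \<le> C * 2 powr (real CARD('d) * (real j - real jU)) *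
          (2 powr (- real CARD('d) * real j * \<phi> (2 powr (- real j)))
           + (\<Sum>k\<in>{k. jU \<le> k \<and> real k \<le> real j / \<delta>}.
                2 powr (- real CARD('d) * real k * (\<delta> - 1 - \<psi> (2 powr (- real k))))))"
proof (rule exI[of _ "2 * 32^CARD('d)"], intro allI impI, elim conjE)
  fix x :: "nat \<Rightarrow> real^'d" and r :: "nat \<Rightarrow> real" and N :: "nat \<Rightarrow> nat" and \<psi> \<phi> :: "real \<Rightarrow> real"
    and \<delta> :: real and U :: "(real^'d) set" and jU j :: nat
  assume sys: "is_system x r" and C1: "cond_C1 x r N \<psi>" and Phi: "in_Phi \<phi>" and dl: "1 < \<delta>"
    and jU1: "1 \<le> jU" and Ug: "U \<in> dyadic_cubes jU" and dj: "\<delta> * real jU \<le> real j"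
  define d where "d = CARD('d)"
  have d1: "1 \<le> d" unfolding d_def by (simp add: Suc_leI)
  obtain a where U: "U = dyadic_cube jU a" using Ug unfolding dyadic_cubes_def by blast
  define g where "g = gamma CARD('d) N \<phi> j"
  define A where "A k = {p\<in>T_set x r k. ball_inf (x p) (r p) \<inter> dyadic_cube jU a \<noteq> {}}" for k
  define Sp where "Sp p = {V \<in> dyadic_cubes j. V \<inter> ball_inf (x p) (r p powr \<delta>) \<noteq> {}}" for p
  define Q where "Q = Qtilde x r N \<phi> U jU j \<delta>"
  define K where "K = {jU..g}"
  define F where "F k = (if real k * \<delta> \<le> real j then 2 powr (- real d * real k * (\<delta> - 1 - \<psi> (2 powr (- real k))))
       else real (N k) * 2 powr (real d * real k) * 2 powr (- real d * real j))" for k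
  define P where "P = 2 powr (real d * (real j - real jU))"
  define B where "B = 2 powr (- real d * real j * \<phi> (2 powr (- real j)))"
  define T where "T = (\<Sum>k\<in>{k. jU \<le> k \<and> real k \<le> real j / \<delta>}.
                2 powr (- real d * real k * (\<delta> - 1 - \<psi> (2 powr (- real k)))))"
  have rpos: "\<And>p. 0 < r p" using sys unfolding is_system_def by blast
  have rT: "r p \<le> 2 powr (- real k)" if "p \<in> T_set x r k" for p k using that unfolding T_set_def by auto
  have le1: "(2::real) powr (- real k) \<le> 1" for k by (simp add: two_powr_neg_nat)
  have sub: "Q \<subseteq> (\<Union>k\<in>K. \<Union>p\<in>A k. Sp p)"
  proof
    fix V assume "V \<in> Q"
    then obtain k p y where V: "V \<in> dyadic_cubes j" "V \<subseteq> U" and k: "k \<in> K" and p: "p \<in> T_set x r k"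
      and y: "y \<in> V" "y \<in> ball_inf (x p) (r p powr \<delta>)"
      unfolding Q_def Qtilde_def g_def K_def by blast
    have "r p powr \<delta> \<le> r p" by (rule powr_delta_le[OF rpos _ dl]) (use rT[OF p] le1[of k] in linarith)
    then have "y \<in> ball_inf (x p) (r p)" using ball_inf_mono y(2) by blast
    then have "p \<in> A k" using V y p U unfolding A_def by blast
    moreover have "V \<in> Sp p" using V y unfolding Sp_def by blast
    ultimately show "V \<in> (\<Union>k\<in>K. \<Union>p\<in>A k. Sp p)" using k by blast
  qed
  have kge: "1 \<le> k" "jU \<le> k" if "k \<in> K" for k using jU1 that unfolding K_def by auto
  have fA: "finite (A k)" and cA: "real (card (A k)) \<le> real (N k) * (8*2^(k-jU))^CARD('d)" if "k \<in> K" for k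
    using Ak_count[OF C1 kge[OF that], of a] unfolding A_def by auto
  have AT: "A k \<subseteq> T_set x r k" for k unfolding A_def by blast
  have fS: "finite (Sp p)" and cS: "real (card (Sp p)) \<le> (4 * Ef \<delta> j k)^CARD('d)" if "p \<in> T_set x r k" for p k
    unfolding Sp_def using per_ball[OF rpos rT[OF that] dl] by auto
  have fU: "finite (\<Union>k\<in>K. \<Union>p\<in>A k. Sp p)"
    using fA fS AT unfolding K_def by blast
  have "card Q \<le> card (\<Union>k\<in>K. \<Union>p\<in>A k. Sp p)" by (rule card_mono[OF fU sub])
  also have "\<dots> \<le> (\<Sum>k\<in>K. card (\<Union>p\<in>A k. Sp p))" by (rule card_UN_le) (simp add: K_def)
  also have "\<dots> \<le> (\<Sum>k\<in>K. \<Sum>p\<in>A k. card (Sp p))" by (rule sum_mono, rule card_UN_le, rule fA)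
  finally have "real (card Q) \<le> real (\<Sum>k\<in>K. \<Sum>p\<in>A k. card (Sp p))" by (simp only: of_nat_le_iff)
  also have "\<dots> = (\<Sum>k\<in>K. \<Sum>p\<in>A k. real (card (Sp p)))" by simp
  also have "\<dots> \<le> (\<Sum>k\<in>K. real (card (A k)) * (4 * Ef \<delta> j k)^CARD('d))"
  proof (rule sum_mono)
    fix k assume "k \<in> K"
    have "(\<Sum>p\<in>A k. real (card (Sp p))) \<le> (\<Sum>p\<in>A k. (4 * Ef \<delta> j k)^CARD('d))"
      by (rule sum_mono) (use cS AT in blast)
    then show "(\<Sum>p\<in>A k. real (card (Sp p))) \<le> real (card (A k)) * (4 * Ef \<delta> j k)^CARD('d)" by simp
  qed
  also have "\<dots> \<le> (\<Sum>k\<in>K. real (N k) * (8*2^(k-jU))^CARD('d) * (4 * Ef \<delta> j k)^CARD('d))"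
    by (rule sum_mono, rule mult_right_mono[OF cA]) (auto simp: Ef_nonneg)
  also have "\<dots> = (\<Sum>k\<in>K. 32^d * P * F k)"
  proof (rule sum.cong[OF refl])
    fix k assume k: "k \<in> K"
    have Nk: "real (N k) = 2 powr (real d * real k * \<psi> (2 powr (- real k)))"
      using C1 unfolding cond_C1_def d_def by blast
    show "real (N k) * (8*2^(k-jU))^CARD('d) * (4 * Ef \<delta> j k)^CARD('d) = 32^d * P * F k"
      using term_eq[OF Nk kge(2)[OF k], of \<delta> j] unfolding P_def F_def d_def by simp
  qed
  also have "\<dots> = 32^d * P * (\<Sum>k\<in>K. F k)" by (simp add: sum_distrib_left)
  also have "\<dots> \<le> 32^d * P * (2 * (B + T))"
  proof (rule mult_left_mono)
    have mN: "mono N" and N1: "\<forall>k. 0 < N k" using C1 unfolding cond_C1_def by auto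
    show "(\<Sum>k\<in>K. F k) \<le> 2 * (B + T)"
      using sumF_bound[OF d1 N1 mN dl jU1, where \<phi>=\<phi> and j=j and \<psi>=\<psi>] unfolding K_def g_def F_def B_def T_def d_def .
    show "0 \<le> 32^d * P" unfolding P_def by simp
  qed
  also have "\<dots> = 2 * 32^d * P * (B + T)" by simp
  finally show "real (card (Qtilde x r N \<phi> U jU j \<delta>))
       \<le> 2 * 32^CARD('d) * 2 powr (real CARD('d) * (real j - real jU)) *
          (2 powr (- real CARD('d) * real j * \<phi> (2 powr (- real j)))
           + (\<Sum>k\<in>{k. jU \<le> k \<and> real k \<le> real j / \<delta>}.
                2 powr (- real CARD('d) * real k * (\<delta> - 1 - \<psi> (2 powr (- real k))))))"
    unfolding Q_def P_def B_def T_def d_def .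
qed

end
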